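(* Let $n,p$ be positive integers, $X\in\mathbb{R}^{n\times p}$, $\mathbf y\in\mathbb{R}^n$, $\delta>0$ and $\lambda>0$. The function \[ f_\lambda(\mathbf t)=\frac1n\|\mathbf y-X_{\mathbf t}\widetilde{\boldsymbol\beta}_{\mathbf t}\|_2^2+\lambda\sum_{j=1}^p t_j,\qquad \mathbf t\in[0,1]^p, \] is continuous over $[0,1]^p$ in the sense that for any sequence $\mathbf t^{(1)},\mathbf t^{(2)},\dots\in[0,1)^p$ converging to some $\mathbf t\in[0,1]^p$, the limit $\lim_{l\to\infty}f_\lambda(\mathbf t^{(l)})$ exists and equals $f_\lambda(\mathbf t)$.
   Context: For $\mathbf t\in[0,1]^p$, $T_{\mathbf t}=\mathrm{Diag}(t_1,\dots,t_p)$, $X_{\mathbf t}=XT_{\mathbf t}$, $L_{\mathbf t}=\frac1n[X_{\mathbf t}^\top X_{\mathbf t}+\delta(I-T_{\mathbf t}^2)]$ with $I$ the $p\times p$ identity, and $\widetilde{\boldsymbol\beta}_{\mathbf t}:=L_{\mathbf t}^{+}\left(X_{\mathbf t}^\top\mathbf y/n\right)$ with $L_{\mathbf t}^+$ the Moore–Penrose pseudo-inverse of $L_{\mathbf t}$. *)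

theory Defs
  imports "HOL-Analysis.Analysis"
begin

text \<open>Moore--Penrose pseudo-inverse, defined by the four Penrose conditions
  (it exists and is unique for every real matrix).\<close>
definition pinv :: "real^'n^'m \<Rightarrow> real^'m^'n" where
  "pinv A = (THE B. A ** B ** A = A \<and> B ** A ** B = B \<and>
                    transpose (A ** B) = A ** B \<and> transpose (B ** A) = B ** A)"

definition Tmat :: "real^'p \<Rightarrow> real^'p^'p" where
  "Tmat t = (\<chi> i j. if i = j then t $ i else 0)"

definition Xt :: "real^'p^'n \<Rightarrow> real^'p \<Rightarrow> real^'p^'n" where
  "Xt X t = X ** Tmat t"

definition Lt :: "real^'p^'n \<Rightarrow> real \<Rightarrow> real^'p \<Rightarrow> real^'p^'p" where
  "Lt X \<delta> t = (1 / real CARD('n)) *\<^sub>R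
      (transpose (Xt X t) ** Xt X t + \<delta> *\<^sub>R (mat 1 - Tmat t ** Tmat t))"

definition beta_t :: "real^'p^'n \<Rightarrow> real^'n \<Rightarrow> real \<Rightarrow> real^'p \<Rightarrow> real^'p" where
  "beta_t X y \<delta> t = pinv (Lt X \<delta> t) *v ((1 / real CARD('n)) *\<^sub>R (transpose (Xt X t) *v y))"

definition f_lam :: "real^'p^'n \<Rightarrow> real^'n \<Rightarrow> real \<Rightarrow> real \<Rightarrow> real^'p \<Rightarrow> real" where
  "f_lam X y \<delta> lam t = (1 / real CARD('n)) * (norm (y - Xt X t *v beta_t X y \<delta> t))\<^sup>2
      + lam * (\<Sum>j\<in>UNIV. t $ j)"

end

theory Submission
  imports Defs "HOL-Analysis.Analysis"
begin


lemma sym_dot: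
  fixes A :: "real^'p^'p"
  assumes "transpose A = A" shows "x \<bullet> (A *v y) = (A *v x) \<bullet> y"
  by (metis assms dot_lmul_matrix vector_transpose_matrix)

lemma range_subspace: "span (range ((*v) (A::real^'p^'q))) = range ((*v) A)"
  by (metis span_eq_iff subspace_UNIV linear_subspace_image matrix_vector_mul_linear)

lemma decomp:
  fixes A :: "real^'p^'p"
  obtains r z where "r \<in> range ((*v) A)" "\<forall>w\<in>range ((*v) A). z \<bullet> w = 0" "x = r + z"
  using orthogonal_subspace_decomp_exists[of "range ((*v) A)" x] range_subspace[of A]
  unfolding orthogonal_def by metis

lemma perp_null:
  fixes A :: "real^'p^'p"
  assumes "transpose A = A" "\<forall>w\<in>range ((*v) A). z \<bullet> w = 0"
  shows "A *v z = 0"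
proof -
  have "z \<bullet> (A *v (A *v z)) = 0" using assms(2) by auto
  then have "(A *v z) \<bullet> (A *v z) = 0" using sym_dot[OF assms(1)] by metis
  then show ?thesis by simp
qed

lemma range_null:
  fixes A :: "real^'p^'p"
  assumes "transpose A = A" "x \<in> range ((*v) A)" "A *v x = 0"
  shows "x = 0"
proof -
  obtain u where u: "x = A *v u" using assms(2) by auto
  have "x \<bullet> x = u \<bullet> (A *v x)" using sym_dot[OF assms(1), of u x] u by (simp add: inner_commute)
  then show ?thesis using assms(3) by simp
qed

definition Qf :: "real^'p^'p \<Rightarrow> real^'p \<Rightarrow> real^'p" where
  "Qf A y = (THE x. x \<in> range ((*v) A) \<and> (\<forall>v\<in>range ((*v) A). (y - A *v x) \<bullet> v = 0))"

lemma Q_uniq: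
  fixes A :: "real^'p^'p"
  assumes "transpose A = A"
    and "x1 \<in> range ((*v) A)" "\<forall>v\<in>range ((*v) A). (y - A *v x1) \<bullet> v = 0"
    and "x2 \<in> range ((*v) A)" "\<forall>v\<in>range ((*v) A). (y - A *v x2) \<bullet> v = 0"
  shows "x1 = x2"
proof -
  have "\<forall>v\<in>range ((*v) A). (A *v (x1 - x2)) \<bullet> v = 0"
  proof
    fix v assume v: "v \<in> range ((*v) A)"
    have "A *v (x1 - x2) = (y - A *v x2) - (y - A *v x1)" by (simp add: matrix_vector_mult_diff_distrib)
    moreover have "(y - A *v x2) \<bullet> v = 0" "(y - A *v x1) \<bullet> v = 0" using assms(3,5) v by auto
    ultimately show "(A *v (x1 - x2)) \<bullet> v = 0" by (metis inner_diff_left diff_zero)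
  qed
  then have "(A *v (x1 - x2)) \<bullet> (A *v (x1 - x2)) = 0" by auto
  then have "A *v (x1 - x2) = 0" by simp
  moreover have "x1 - x2 \<in> range ((*v) A)"
  proof -
    have "x1 - x2 \<in> span (range ((*v) A))" using assms(2,4) by (intro span_diff span_base)
    then show ?thesis by (simp only: range_subspace)
  qed
  ultimately have "x1 - x2 = 0" using range_null[OF assms(1)] by blast
  then show ?thesis by simp
qed

lemma Q_ex:
  fixes A :: "real^'p^'p"
  assumes "transpose A = A"
  shows "\<exists>x. x \<in> range ((*v) A) \<and> (\<forall>v\<in>range ((*v) A). (y - A *v x) \<bullet> v = 0)"
proof -
  obtain r z where rz: "r \<in> range ((*v) A)" "\<forall>w\<in>range ((*v) A). z \<bullet> w = 0" "y = r + z"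
    using decomp by blast
  obtain u where u: "r = A *v u" using rz(1) by auto
  obtain u1 u2 where uu: "u1 \<in> range ((*v) A)" "\<forall>w\<in>range ((*v) A). u2 \<bullet> w = 0" "u = u1 + u2"
    using decomp by blast
  have "A *v u2 = 0" using perp_null[OF assms uu(2)] .
  then have "A *v u1 = r" using u uu(3) by (simp add: matrix_vector_right_distrib)
  then have "y - A *v u1 = z" using rz(3) by simp
  then show ?thesis using uu(1) rz(2) by (intro exI[of _ u1]) simp
qed

lemma Q_prop:
  fixes A :: "real^'p^'p"
  assumes "transpose A = A"
  shows "Qf A y \<in> range ((*v) A)" "\<forall>v\<in>range ((*v) A). (y - A *v Qf A y) \<bullet> v = 0"
proof -
  have "\<exists>!x. x \<in> range ((*v) A) \<and> (\<forall>v\<in>range ((*v) A). (y - A *v x) \<bullet> v = 0)"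
    using Q_ex[OF assms] Q_uniq[OF assms] by blast
  from theI'[OF this] show "Qf A y \<in> range ((*v) A)" "\<forall>v\<in>range ((*v) A). (y - A *v Qf A y) \<bullet> v = 0"
    unfolding Qf_def by auto
qed

lemma Q_eq:
  fixes A :: "real^'p^'p"
  assumes "transpose A = A" "x \<in> range ((*v) A)" "\<forall>v\<in>range ((*v) A). (y - A *v x) \<bullet> v = 0"
  shows "Qf A y = x"
  using Q_uniq[OF assms(1) Q_prop[OF assms(1)] assms(2,3)] .

lemma Q_linear:
  fixes A :: "real^'p^'p"
  assumes "transpose A = A"
  shows "linear (Qf A)"
proof
  fix a b
  show "Qf A (a + b) = Qf A a + Qf A b"
  proof (rule Q_eq[OF assms])
    show "Qf A a + Qf A b \<in> range ((*v) A)"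
      using Q_prop(1)[OF assms, of a] Q_prop(1)[OF assms, of b] range_subspace[of A] by (metis span_add span_base)
    show "\<forall>v\<in>range ((*v) A). (a + b - A *v (Qf A a + Qf A b)) \<bullet> v = 0"
      using Q_prop(2)[OF assms, of a] Q_prop(2)[OF assms, of b]
      by (simp add: matrix_vector_right_distrib inner_diff_left inner_add_left algebra_simps)
  qed
next
  fix c :: real and a
  show "Qf A (c *\<^sub>R a) = c *\<^sub>R Qf A a"
  proof (rule Q_eq[OF assms])
    show "c *\<^sub>R Qf A a \<in> range ((*v) A)"
      using Q_prop(1)[OF assms, of a] range_subspace[of A] by (metis span_mul span_base)
    have "c *\<^sub>R a - A *v (c *\<^sub>R Qf A a) = c *\<^sub>R (a - A *v Qf A a)"
      by (simp add: matrix_vector_mult_scaleR scaleR_diff_right)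
    then show "\<forall>v\<in>range ((*v) A). (c *\<^sub>R a - A *v (c *\<^sub>R Qf A a)) \<bullet> v = 0"
      using Q_prop(2)[OF assms, of a] by simp
  qed
qed



lemma sym_iff:
  fixes M :: "real^'p^'p"
  assumes "\<And>x y. (M *v x) \<bullet> y = x \<bullet> (M *v y)"
  shows "transpose M = M"
proof -
  have "M *v x = transpose M *v x" for x
  proof -
    have "\<And>y. (M *v x - transpose M *v x) \<bullet> y = 0"
      using assms dot_lmul_matrix[of x M] by (simp add: inner_diff_left)
    then have "(M *v x - transpose M *v x) \<bullet> (M *v x - transpose M *v x) = 0" by blast
    then show ?thesis by simp
  qed
  then show ?thesis by (simp add: matrix_eq)
qed

lemma Q_mat:
  fixes A :: "real^'p^'p"
  assumes "transpose A = A"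
  shows "matrix (Qf A) *v x = Qf A x"
  using matrix_vector_mul(2)[OF Q_linear[OF assms]] by metis

lemma Q_AQA:
  fixes A :: "real^'p^'p"
  assumes "transpose A = A"
  shows "A *v Qf A (A *v x) = A *v x"
proof -
  let ?w = "A *v x - A *v Qf A (A *v x)"
  have "?w = A *v (x - Qf A (A *v x))" by (simp add: matrix_vector_mult_diff_distrib)
  then have "?w \<in> range ((*v) A)" by auto
  then have "?w \<bullet> ?w = 0" using Q_prop(2)[OF assms, of "A *v x"] by blast
  then show ?thesis by simp
qed

lemma Q_proj:
  fixes A :: "real^'p^'p"
  assumes "transpose A = A"
  shows "\<forall>v\<in>range ((*v) A). (x - Qf A (A *v x)) \<bullet> v = 0"
proof -
  obtain x1 x2 where xx: "x1 \<in> range ((*v) A)" "\<forall>w\<in>range ((*v) A). x2 \<bullet> w = 0" "x = x1 + x2"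
    using decomp by blast
  have "A *v x2 = 0" using perp_null[OF assms xx(2)] .
  then have "A *v x - A *v x1 = 0" using xx(3) by (simp add: matrix_vector_right_distrib)
  then have "Qf A (A *v x) = x1" using xx(1) by (intro Q_eq[OF assms]) auto
  then show ?thesis using xx by simp
qed

lemma Q_penrose:
  fixes A :: "real^'p^'p"
  assumes sy: "transpose A = A"
  defines "B \<equiv> matrix (Qf A)"
  shows "A ** B ** A = A \<and> B ** A ** B = B \<and>
         transpose (A ** B) = A ** B \<and> transpose (B ** A) = B ** A"
proof (intro conjI)
  have Bv: "B *v x = Qf A x" for x unfolding B_def by (rule Q_mat[OF sy])
  show "A ** B ** A = A"
    by (simp add: matrix_eq flip: matrix_vector_mul_assoc add: Bv Q_AQA[OF sy])
  have "Qf A (A *v Qf A y) = Qf A y" for y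
    using Q_prop(1)[OF sy] by (intro Q_eq[OF sy]) auto
  then show "B ** A ** B = B"
    by (simp add: matrix_eq flip: matrix_vector_mul_assoc add: Bv)
  show "transpose (A ** B) = A ** B"
  proof (rule sym_iff)
    fix x y :: "real^'p"
    have e: "(A *v Qf A x) \<bullet> z = (A *v Qf A x) \<bullet> (A *v Qf A z)" for x z
    proof -
      have "(A *v Qf A x) \<bullet> (z - A *v Qf A z) = 0"
        using Q_prop(2)[OF sy, of z] by (metis inner_commute rangeI)
      then show ?thesis by (simp add: inner_diff_right)
    qed
    have "((A ** B) *v x) \<bullet> y = (A *v Qf A x) \<bullet> y" by (simp flip: matrix_vector_mul_assoc add: Bv)
    also have "\<dots> = (A *v Qf A x) \<bullet> (A *v Qf A y)" by (rule e)
    also have "\<dots> = (A *v Qf A y) \<bullet> x" by (metis e inner_commute)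
    also have "\<dots> = x \<bullet> ((A ** B) *v y)" by (simp flip: matrix_vector_mul_assoc add: Bv inner_commute)
    finally show "((A ** B) *v x) \<bullet> y = x \<bullet> ((A ** B) *v y)" .
  qed
  show "transpose (B ** A) = B ** A"
  proof (rule sym_iff)
    fix x y :: "real^'p"
    have e: "(Qf A (A *v x)) \<bullet> z = (Qf A (A *v x)) \<bullet> (Qf A (A *v z))" for x z
    proof -
      have "(Qf A (A *v x)) \<bullet> (z - Qf A (A *v z)) = 0"
        using Q_proj[OF sy, of z] Q_prop(1)[OF sy, of "A *v x"] by (metis inner_commute)
      then show ?thesis by (simp add: inner_diff_right)
    qed
    have "((B ** A) *v x) \<bullet> y = (Qf A (A *v x)) \<bullet> y" by (simp flip: matrix_vector_mul_assoc add: Bv)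
    also have "\<dots> = (Qf A (A *v x)) \<bullet> (Qf A (A *v y))" by (rule e)
    also have "\<dots> = (Qf A (A *v y)) \<bullet> x" by (metis e inner_commute)
    also have "\<dots> = x \<bullet> ((B ** A) *v y)" by (simp flip: matrix_vector_mul_assoc add: Bv inner_commute)
    finally show "((B ** A) *v x) \<bullet> y = x \<bullet> ((B ** A) *v y)" .
  qed
qed

lemma penrose_unique:
  fixes A :: "real^'p^'q"
  assumes B: "A ** B ** A = A" "B ** A ** B = B" "transpose (A ** B) = A ** B" "transpose (B ** A) = B ** A"
    and C: "A ** C ** A = A" "C ** A ** C = C" "transpose (A ** C) = A ** C" "transpose (C ** A) = C ** A"
  shows "B = C"
proof -
  have "B = B ** (A ** B)" using B(2) by (simp add: matrix_mul_assoc)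
  also have "\<dots> = B ** transpose (A ** B)" using B(3) by simp
  also have "\<dots> = B ** transpose B ** transpose A" by (simp add: matrix_transpose_mul matrix_mul_assoc)
  also have "\<dots> = B ** transpose B ** transpose (A ** C ** A)" using C(1) by simp
  also have "\<dots> = B ** transpose (A ** B) ** transpose (A ** C)" by (simp add: matrix_transpose_mul matrix_mul_assoc)
  also have "\<dots> = B ** (A ** B) ** (A ** C)" using B(3) C(3) by simp
  also have "\<dots> = (B ** A ** B) ** A ** C" by (simp add: matrix_mul_assoc)
  also have "\<dots> = B ** A ** C" using B(2) by simp
  finally have 1: "B = B ** A ** C" .
  have "C = (C ** A) ** C" using C(2) by simp
  also have "\<dots> = transpose (C ** A) ** C" using C(4) by simp
  also have "\<dots> = transpose A ** transpose C ** C" by (simp add: matrix_transpose_mul matrix_mul_assoc)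
  also have "\<dots> = transpose (A ** B ** A) ** transpose C ** C" using B(1) by simp
  also have "\<dots> = transpose (B ** A) ** transpose (C ** A) ** C" by (simp add: matrix_transpose_mul matrix_mul_assoc)
  also have "\<dots> = (B ** A) ** (C ** A) ** C" using B(4) C(4) by simp
  also have "\<dots> = B ** A ** (C ** A ** C)" by (simp add: matrix_mul_assoc)
  also have "\<dots> = B ** A ** C" using C(2) by simp
  finally show ?thesis using 1 by simp
qed

lemma pinv_sym:
  fixes A :: "real^'p^'p"
  assumes "transpose A = A"
  shows "pinv A *v x = Qf A x"
proof -
  have "pinv A = matrix (Qf A)"
    unfolding pinv_def
    apply (rule the_equality)
     apply (rule Q_penrose[OF assms])
    using penrose_unique Q_penrose[OF assms] by blast
  then show ?thesis using Q_mat[OF assms] by simp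
qed



lemma Tmat_mv: "Tmat u *v w = (\<chi> j. u $ j * w $ j)"
  by (simp add: Tmat_def matrix_vector_mult_def vec_eq_iff if_distrib if_distribR sum.delta cong: if_cong)

lemma Xt_mv: "Xt X u *v w = X *v (\<chi> j. u $ j * w $ j)"
  by (simp add: Xt_def Tmat_mv flip: matrix_vector_mul_assoc)

lemma tdot: "(transpose M *v a) \<bullet> (b::real^_) = a \<bullet> (M *v b)"
  by (simp add: dot_lmul_matrix)

lemma Lt_mv: "Lt X \<delta> u *v w = (1 / real CARD('n)) *\<^sub>R
   (transpose (Xt X u) *v (Xt X u *v w) + \<delta> *\<^sub>R (\<chi> j. (1 - (u $ j)^2) * w $ j))"
  for X :: "real^'p^'n"
proof -
  have "(mat 1 - Tmat u ** Tmat u) *v w = (\<chi> j. (1 - (u $ j)^2) * w $ j)"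
    by (simp add: matrix_vector_mult_diff_rdistrib Tmat_mv vec_eq_iff power2_eq_square algebra_simps
        flip: matrix_vector_mul_assoc)
  then show ?thesis unfolding Lt_def
    by (simp add: matrix_vector_mult_add_rdistrib flip: scaleR_matrix_vector_assoc matrix_vector_mul_assoc)
qed

lemma Lt_quad: "(Lt X \<delta> u *v w) \<bullet> v = (1 / real CARD('n)) *
   ((Xt X u *v w) \<bullet> (Xt X u *v v) + \<delta> * (\<Sum>j\<in>UNIV. (1 - (u $ j)^2) * w $ j * v $ j))"
  for X :: "real^'p^'n"
proof -
  have "(Lt X \<delta> u *v w) \<bullet> v = (1 / real CARD('n)) * ((transpose (Xt X u) *v (Xt X u *v w)) \<bullet> v
     + \<delta> * ((\<chi> j. (1 - (u $ j)^2) * w $ j) \<bullet> v))"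
    by (simp only: Lt_mv inner_scaleR_left inner_add_left)
  also have "\<dots> = (1 / real CARD('n)) *
   ((Xt X u *v w) \<bullet> (Xt X u *v v) + \<delta> * (\<Sum>j\<in>UNIV. (1 - (u $ j)^2) * w $ j * v $ j))"
    by (simp only: tdot) (simp add: inner_vec_def)
  finally show ?thesis .
qed

lemma Lt_sym: "transpose (Lt X \<delta> u) = Lt X \<delta> u"
  for X :: "real^'p^'n"
proof (rule sym_iff)
  fix x y
  show "(Lt X \<delta> u *v x) \<bullet> y = x \<bullet> (Lt X \<delta> u *v y)"
    using Lt_quad[of X \<delta> u x y] Lt_quad[of X \<delta> u y x]
    by (simp add: inner_commute mult.commute mult.left_commute)
qed

lemma normal_eq:
  fixes X :: "real^'p^'n"
  assumes "\<delta> > 0" "\<And>j. \<bar>u $ j\<bar> \<le> 1"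
  shows "(y - Xt X u *v beta_t X y \<delta> u) \<bullet> (Xt X u *v h) =
     \<delta> * (\<Sum>j\<in>UNIV. (1 - (u $ j)^2) * beta_t X y \<delta> u $ j * h $ j)"
proof -
  let ?L = "Lt X \<delta> u" and ?M = "Xt X u" and ?c = "1 / real CARD('n)"
  define b where "b = ?c *\<^sub>R (transpose ?M *v y)"
  define \<beta> where "\<beta> = beta_t X y \<delta> u"
  have c: "?c > 0" by simp
  have \<beta>Q: "\<beta> = Qf ?L b" unfolding \<beta>_def beta_t_def b_def by (simp add: pinv_sym[OF Lt_sym])
  define w where "w = b - ?L *v \<beta>"
  have wperp: "\<forall>v\<in>range ((*v) ?L). w \<bullet> v = 0"
    unfolding w_def \<beta>Q using Q_prop(2)[OF Lt_sym] by blast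
  have Lw: "?L *v w = 0" using perp_null[OF Lt_sym wperp] .
  have "(?L *v w) \<bullet> w = 0" using Lw by simp
  then have "(?M *v w) \<bullet> (?M *v w) + \<delta> * (\<Sum>j\<in>UNIV. (1 - (u $ j)^2) * w $ j * w $ j) = 0"
    using c by (simp add: Lt_quad)
  moreover have "(\<Sum>j\<in>UNIV. (1 - (u $ j)^2) * w $ j * w $ j) \<ge> 0"
  proof (rule sum_nonneg)
    fix j
    have "(u $ j)^2 \<le> 1" using assms(2)[of j] by (simp add: abs_square_le_1)
    then show "0 \<le> (1 - (u $ j)^2) * w $ j * w $ j" by (simp add: mult.assoc)
  qed
  moreover have "(?M *v w) \<bullet> (?M *v w) \<ge> 0" by simp
  ultimately have "(?M *v w) \<bullet> (?M *v w) = 0" using assms(1)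
    by (smt (verit) mult_nonneg_nonneg)
  then have Mw: "?M *v w = 0" by simp
  have "b \<bullet> w = 0" unfolding b_def inner_scaleR_left tdot Mw by simp
  moreover have "(?L *v \<beta>) \<bullet> w = 0" using wperp by (simp add: inner_commute)
  ultimately have "w \<bullet> w = 0" unfolding w_def by (simp add: inner_diff_left)
  then have Lb: "?L *v \<beta> = b" unfolding w_def by simp
  have "(?L *v \<beta>) \<bullet> h = b \<bullet> h" by (simp add: Lb)
  then have "?c * ((?M *v \<beta>) \<bullet> (?M *v h) + \<delta> * (\<Sum>j\<in>UNIV. (1 - (u $ j)^2) * \<beta> $ j * h $ j))
      = ?c * (y \<bullet> (?M *v h))"
    unfolding Lt_quad b_def inner_scaleR_left tdot by simp
  then have "(?M *v \<beta>) \<bullet> (?M *v h) + \<delta> * (\<Sum>j\<in>UNIV. (1 - (u $ j)^2) * \<beta> $ j * h $ j)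
      = y \<bullet> (?M *v h)" using c by simp
  then show ?thesis unfolding \<beta>_def[symmetric] by (simp add: inner_diff_left)
qed

lemma quad:
  fixes M :: "real^'p^'n"
  assumes "\<And>h. (y - M *v b0) \<bullet> (M *v h) = \<delta> * (\<Sum>j\<in>UNIV. d j * b0 $ j * h $ j)"
  shows "(norm (y - M *v (b0 + h)))^2 + \<delta> * (\<Sum>j\<in>UNIV. d j * (b0 + h) $ j ^ 2) =
     (norm (y - M *v b0))^2 + \<delta> * (\<Sum>j\<in>UNIV. d j * b0 $ j ^ 2) + (norm (M *v h))^2
       + \<delta> * (\<Sum>j\<in>UNIV. d j * h $ j ^ 2)"
proof -
  have e1: "y - M *v (b0 + h) = (y - M *v b0) - M *v h" by (simp add: matrix_vector_right_distrib)
  have "(norm (y - M *v (b0 + h)))^2 = (norm (y - M *v b0))^2 - 2 * ((y - M *v b0) \<bullet> (M *v h)) + (norm (M *v h))^2"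
    unfolding e1 power2_norm_eq_inner by (simp add: inner_diff_left inner_diff_right inner_commute)
  moreover have "(\<Sum>j\<in>UNIV. d j * (b0 + h) $ j ^ 2) = (\<Sum>j\<in>UNIV. d j * b0 $ j ^ 2)
      + 2 * (\<Sum>j\<in>UNIV. d j * b0 $ j * h $ j) + (\<Sum>j\<in>UNIV. d j * h $ j ^ 2)"
    by (simp add: power2_sum sum.distrib sum_distrib_left algebra_simps)
  ultimately show ?thesis using assms[of h] by (simp add: algebra_simps)
qed



definition Phi :: "real^'p^'n \<Rightarrow> real^'n \<Rightarrow> real \<Rightarrow> real^'p \<Rightarrow> real^'p \<Rightarrow> real" where
  "Phi X y \<delta> u b = (norm (y - Xt X u *v b))^2 + \<delta> * (\<Sum>j\<in>UNIV. (1 - (u $ j)^2) * (b $ j)^2)"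

lemma pen_nonneg:
  assumes "\<delta> \<ge> 0" "\<And>j. \<bar>u $ j\<bar> \<le> (1::real)"
  shows "0 \<le> \<delta> * (\<Sum>j\<in>UNIV. (1 - (u $ j)^2) * (h $ j)^2)"
proof -
  have "0 \<le> (\<Sum>j\<in>UNIV. (1 - (u $ j)^2) * (h $ j)^2)"
  proof (rule sum_nonneg)
    fix j
    have "(u $ j)^2 \<le> 1" using assms(2)[of j] by (simp add: abs_square_le_1)
    then show "0 \<le> (1 - (u $ j)^2) * (h $ j)^2" by simp
  qed
  then show ?thesis using assms(1) by simp
qed

lemma Phi_min:
  fixes X :: "real^'p^'n"
  assumes "\<delta> > 0" "\<And>j. \<bar>u $ j\<bar> \<le> 1"
  shows "Phi X y \<delta> u b \<ge> Phi X y \<delta> u (beta_t X y \<delta> u)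
           + (norm (Xt X u *v b - Xt X u *v beta_t X y \<delta> u))^2"
proof -
  let ?\<beta> = "beta_t X y \<delta> u"
  have q: "(norm (y - Xt X u *v (?\<beta> + h)))^2 + \<delta> * (\<Sum>j\<in>UNIV. (1 - (u $ j)^2) * (?\<beta> + h) $ j ^ 2) =
     (norm (y - Xt X u *v ?\<beta>))^2 + \<delta> * (\<Sum>j\<in>UNIV. (1 - (u $ j)^2) * ?\<beta> $ j ^ 2) + (norm (Xt X u *v h))^2
       + \<delta> * (\<Sum>j\<in>UNIV. (1 - (u $ j)^2) * h $ j ^ 2)" for h
    by (rule quad) (rule normal_eq[OF assms])
  have "Xt X u *v (b - ?\<beta>) = Xt X u *v b - Xt X u *v ?\<beta>" by (simp add: matrix_vector_mult_diff_distrib)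
  then show ?thesis
    using q[of "b - ?\<beta>"] pen_nonneg[of \<delta> u "b - ?\<beta>"] assms unfolding Phi_def by simp
qed

lemma Phi_bound:
  fixes X :: "real^'p^'n"
  assumes "Phi X y \<delta> u b \<le> K" "\<delta> > 0" "\<And>j. \<bar>u $ j\<bar> \<le> 1"
  shows "(norm (y - Xt X u *v b))^2 \<le> K" "\<delta> * ((1 - (u $ j)^2) * (b $ j)^2) \<le> K"
proof -
  have nn: "\<And>j. 0 \<le> (1 - (u $ j)^2) * (b $ j)^2"
    using assms(3) by (simp add: abs_square_le_1)
  then have "0 \<le> (\<Sum>j\<in>UNIV. (1 - (u $ j)^2) * (b $ j)^2)" by (simp add: sum_nonneg)
  then show "(norm (y - Xt X u *v b))^2 \<le> K" using assms(1,2) unfolding Phi_def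
    by (smt (verit) mult_nonneg_nonneg)
  have "(1 - (u $ j)^2) * (b $ j)^2 \<le> (\<Sum>j\<in>UNIV. (1 - (u $ j)^2) * (b $ j)^2)"
    by (rule member_le_sum) (auto simp: nn)
  then have "\<delta> * ((1 - (u $ j)^2) * (b $ j)^2) \<le> \<delta> * (\<Sum>j\<in>UNIV. (1 - (u $ j)^2) * (b $ j)^2)"
    using assms(2) by simp
  moreover have "0 \<le> (norm (y - Xt X u *v b))^2" by simp
  ultimately show "\<delta> * ((1 - (u $ j)^2) * (b $ j)^2) \<le> K" using assms(1) unfolding Phi_def by linarith
qed

lemma mv_tendsto [tendsto_intros]:
  fixes X :: "real^'p^'n"
  shows "(f \<longlongrightarrow> a) F \<Longrightarrow> ((\<lambda>x. X *v f x) \<longlongrightarrow> X *v a) F"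
  by (rule bounded_linear.tendsto[OF matrix_vector_mul_bounded_linear])

lemma Phi_cont:
  fixes X :: "real^'p^'n"
  assumes "s \<longlonglongrightarrow> t"
  shows "(\<lambda>l. Phi X y \<delta> (s l) b) \<longlonglongrightarrow> Phi X y \<delta> t b"
  unfolding Phi_def Xt_mv
  by (intro tendsto_intros tendsto_vec_nth assms)



lemma zero_case:
  fixes a b :: "nat \<Rightarrow> real"
  assumes "a \<longlonglongrightarrow> 0" "\<And>l. \<delta> * ((1 - (a l)^2) * (b l)^2) \<le> K" "\<delta> > 0"
  shows "(\<lambda>l. a l * b l) \<longlonglongrightarrow> 0"
proof (rule Lim_null_comparison)
  define C where "C = sqrt (4 * K / (3 * \<delta>))"
  have ev: "\<forall>\<^sub>F l in sequentially. \<bar>a l\<bar> < 1/2"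
    using tendstoD[OF assms(1), of "1/2"] by (simp add: dist_real_def)
  show "\<forall>\<^sub>F l in sequentially. norm (a l * b l) \<le> \<bar>a l\<bar> * C"
  proof (rule eventually_mono[OF ev])
    fix l assume h: "\<bar>a l\<bar> < 1/2"
    have "(a l)^2 \<le> 1/4"
    proof -
      have "\<bar>a l\<bar>^2 \<le> (1/2)^2" using h by (intro power_mono) auto
      then show ?thesis by (simp add: power2_eq_square)
    qed
    then have "3/4 * (b l)^2 \<le> (1 - (a l)^2) * (b l)^2" by (intro mult_right_mono) auto
    then have "\<delta> * (3/4 * (b l)^2) \<le> \<delta> * ((1 - (a l)^2) * (b l)^2)"
      using assms(3) by (intro mult_left_mono) auto
    then have "\<delta> * (3/4 * (b l)^2) \<le> K" using assms(2)[of l] by linarith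
    then have "(b l)^2 \<le> 4 * K / (3 * \<delta>)" using assms(3) by (simp add: field_simps)
    then have "\<bar>b l\<bar> \<le> C" unfolding C_def by (metis real_le_rsqrt power2_abs)
    then show "norm (a l * b l) \<le> \<bar>a l\<bar> * C" by (simp add: abs_mult mult_left_mono)
  qed
  show "(\<lambda>l. \<bar>a l\<bar> * C) \<longlonglongrightarrow> 0"
    by (intro tendsto_mult_left_zero tendsto_rabs_zero assms(1))
qed

lemma mid_case:
  fixes a b :: "nat \<Rightarrow> real"
  assumes "a \<longlonglongrightarrow> \<tau>" "0 < \<tau>" "\<tau> < 1" "\<And>l. \<delta> * ((1 - (a l)^2) * (b l)^2) \<le> K" "\<delta> > 0"
  shows "(\<lambda>l. (1 - \<tau>^2) * (a l * b l / \<tau>)^2 - (1 - (a l)^2) * (b l)^2) \<longlonglongrightarrow> 0"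
proof (rule Lim_null_comparison)
  define D where "D = 1 - \<tau>^2"
  have D: "D > 0" unfolding D_def using assms(2,3) by (simp add: power_less_one_iff abs_square_less_1)
  define C where "C = 2 * K / (\<delta> * D)"
  define g where "g l = D * (a l)^2 / \<tau>^2 - (1 - (a l)^2)" for l
  have "(\<lambda>l. 1 - (a l)^2) \<longlonglongrightarrow> D" unfolding D_def by (intro tendsto_intros assms(1))
  then have ev: "\<forall>\<^sub>F l in sequentially. 1 - (a l)^2 > D/2" using D by (intro order_tendstoD(1)) auto
  show "\<forall>\<^sub>F l in sequentially. norm ((1 - \<tau>^2) * (a l * b l / \<tau>)^2 - (1 - (a l)^2) * (b l)^2) \<le> C * \<bar>g l\<bar>"
  proof (rule eventually_mono[OF ev])
    fix l assume h: "1 - (a l)^2 > D/2"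
    have "D/2 * (b l)^2 \<le> (1 - (a l)^2) * (b l)^2" using h by (intro mult_right_mono) auto
    then have "\<delta> * (D/2 * (b l)^2) \<le> \<delta> * ((1 - (a l)^2) * (b l)^2)"
      using assms(5) by (intro mult_left_mono) auto
    then have "\<delta> * (D/2 * (b l)^2) \<le> K" using assms(4)[of l] by linarith
    then have bC: "(b l)^2 \<le> C" unfolding C_def using assms(5) D by (simp add: field_simps)
    have "(1 - \<tau>^2) * (a l * b l / \<tau>)^2 - (1 - (a l)^2) * (b l)^2 = (b l)^2 * g l"
      unfolding g_def D_def by (simp add: power_mult_distrib power_divide algebra_simps)
    then have "norm ((1 - \<tau>^2) * (a l * b l / \<tau>)^2 - (1 - (a l)^2) * (b l)^2) = (b l)^2 * \<bar>g l\<bar>"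
      by (simp add: abs_mult)
    also have "\<dots> \<le> C * \<bar>g l\<bar>" using bC by (simp add: mult_right_mono)
    finally show "norm ((1 - \<tau>^2) * (a l * b l / \<tau>)^2 - (1 - (a l)^2) * (b l)^2) \<le> C * \<bar>g l\<bar>" .
  qed
  have "g \<longlonglongrightarrow> D * \<tau>^2 / \<tau>^2 - (1 - \<tau>^2)" unfolding g_def[abs_def] by (intro tendsto_intros assms(1)) (use assms(2) in auto)
  moreover have "D * \<tau>^2 / \<tau>^2 - (1 - \<tau>^2) = 0" unfolding D_def using assms(2) by simp
  ultimately have "g \<longlonglongrightarrow> 0" by simp
  then show "(\<lambda>l. C * \<bar>g l\<bar>) \<longlonglongrightarrow> 0"
    using tendsto_mult_right_zero[OF tendsto_rabs_zero] by (metis mult.commute tendsto_mult_left_zero)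
qed



theorem theorem3:
  fixes X :: "real^'p^'n" and y :: "real^'n" and \<delta> lam :: real
    and s :: "nat \<Rightarrow> real^'p" and t :: "real^'p"
  assumes "\<delta> > 0" and "lam > 0"
    and "\<And>l j. 0 \<le> s l $ j \<and> s l $ j < 1"
    and "\<And>j. 0 \<le> t $ j \<and> t $ j \<le> 1"
    and "s \<longlonglongrightarrow> t"
  shows "(\<lambda>l. f_lam X y \<delta> lam (s l)) \<longlonglongrightarrow> f_lam X y \<delta> lam t"
proof -
  have dpos: "\<delta> > 0" by (rule assms(1))
  have sabs: "\<bar>s l $ j\<bar> \<le> 1" for l j using assms(3)[of l j] by auto
  have tabs: "\<bar>t $ j\<bar> \<le> 1" for j using assms(4)[of j] by auto
  have sj: "(\<lambda>l. s l $ j) \<longlonglongrightarrow> t $ j" for j using assms(5) by (rule tendsto_vec_nth)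
  define bl where "bl l = beta_t X y \<delta> (s l)" for l
  define bs where "bs = beta_t X y \<delta> t"
  define K where "K = (norm y)^2"
  have Nl: "Phi X y \<delta> (s l) b \<ge> Phi X y \<delta> (s l) (bl l) + (norm (Xt X (s l) *v b - Xt X (s l) *v bl l))^2" for l b
    unfolding bl_def by (rule Phi_min[OF dpos sabs])
  have Nt: "Phi X y \<delta> t b \<ge> Phi X y \<delta> t bs + (norm (Xt X t *v b - Xt X t *v bs))^2" for b
    unfolding bs_def by (rule Phi_min[OF dpos tabs])
  have bnd: "Phi X y \<delta> (s l) (bl l) \<le> K" for l
  proof -
    have "Phi X y \<delta> (s l) 0 = K" unfolding Phi_def K_def by simp
    moreover have "0 \<le> (norm (Xt X (s l) *v 0 - Xt X (s l) *v bl l))^2" by simp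
    ultimately show ?thesis using Nl[of l 0] by linarith
  qed
  have res_bnd: "norm (y - Xt X (s l) *v bl l) \<le> norm y" for l
    using Phi_bound(1)[OF bnd dpos sabs] unfolding K_def by (rule power2_le_imp_le) simp
  have pen: "\<delta> * ((1 - (s l $ j)^2) * (bl l $ j)^2) \<le> K" for l j
    using Phi_bound(2)[OF bnd dpos sabs] .
  define e where "e l = (\<chi> j. if t $ j = 0 then s l $ j * bl l $ j else 0)" for l
  define bp where "bp l = (\<chi> j. if t $ j = 0 then 0 else s l $ j * bl l $ j / t $ j)" for l
  define q where "q l j = max 0 ((1 - (t $ j)^2) * (bp l $ j)^2 - (1 - (s l $ j)^2) * (bl l $ j)^2)" for l j
  have e0: "e \<longlonglongrightarrow> 0"
  proof (rule vec_tendstoI)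
    fix j
    show "(\<lambda>l. e l $ j) \<longlonglongrightarrow> 0 $ j"
    proof (cases "t $ j = 0")
      case True
      then show ?thesis unfolding e_def using zero_case[of "\<lambda>l. s l $ j" \<delta> "\<lambda>l. bl l $ j" K, OF _ pen dpos] sj[of j] by simp
    next
      case False
      then show ?thesis unfolding e_def by simp
    qed
  qed
  have q0: "(\<lambda>l. q l j) \<longlonglongrightarrow> 0" for j
  proof -
    consider "t $ j = 0" | "t $ j = 1" | "0 < t $ j" "t $ j < 1" using assms(4)[of j] by fastforce
    then show ?thesis
    proof cases
      case 1
      have "q l j = 0" for l
      proof -
        have "0 \<le> (1 - (s l $ j)^2) * (bl l $ j)^2" using sabs[of l j] by (simp add: abs_square_le_1)
        then show ?thesis unfolding q_def bp_def using 1 by simp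
      qed
      then show ?thesis by simp
    next
      case 2
      have "q l j = 0" for l
      proof -
        have "0 \<le> (1 - (s l $ j)^2) * (bl l $ j)^2" using sabs[of l j] by (simp add: abs_square_le_1)
        then show ?thesis unfolding q_def using 2 by simp
      qed
      then show ?thesis by simp
    next
      case 3
      have "(\<lambda>l. (1 - (t $ j)^2) * (s l $ j * bl l $ j / t $ j)^2 - (1 - (s l $ j)^2) * (bl l $ j)^2) \<longlonglongrightarrow> 0"
        by (rule mid_case[of "\<lambda>l. s l $ j" "t $ j" \<delta> "\<lambda>l. bl l $ j" K, OF sj 3 pen dpos])
      then have "(\<lambda>l. max 0 ((1 - (t $ j)^2) * (s l $ j * bl l $ j / t $ j)^2 - (1 - (s l $ j)^2) * (bl l $ j)^2)) \<longlonglongrightarrow> max 0 0"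
        by (intro tendsto_max tendsto_const)
      then show ?thesis unfolding q_def bp_def using 3 by simp
    qed
  qed
  have split: "Xt X (s l) *v bl l = Xt X t *v bp l + X *v e l" for l
  proof -
    have "(\<chi> j. s l $ j * bl l $ j) = (\<chi> j. t $ j * bp l $ j) + e l"
      unfolding e_def bp_def by (simp add: vec_eq_iff)
    then show ?thesis unfolding Xt_mv by (simp add: matrix_vector_right_distrib)
  qed
  define G where "G l = 2 * norm y * norm (X *v e l) + (norm (X *v e l))^2 + \<delta> * (\<Sum>j\<in>UNIV. q l j)" for l
  have G0: "G \<longlonglongrightarrow> 0"
  proof -
    have "(\<lambda>l. X *v e l) \<longlonglongrightarrow> X *v 0" by (intro tendsto_intros e0)
    then have n0: "(\<lambda>l. norm (X *v e l)) \<longlonglongrightarrow> 0" using tendsto_norm_zero by fastforce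
    have "(\<lambda>l. \<Sum>j\<in>UNIV. q l j) \<longlonglongrightarrow> 0" by (intro tendsto_null_sum q0)
    then have "G \<longlonglongrightarrow> 2 * norm y * 0 + 0^2 + \<delta> * 0" unfolding G_def[abs_def]
      by (intro tendsto_intros n0)
    then show ?thesis by simp
  qed
  have PG: "Phi X y \<delta> t (bp l) \<le> Phi X y \<delta> (s l) (bl l) + G l" for l
  proof -
    let ?a = "y - Xt X (s l) *v bl l" and ?v = "X *v e l"
    have eq: "y - Xt X t *v bp l = ?a + ?v" using split[of l] by (simp add: algebra_simps)
    have "(norm (?a + ?v))^2 \<le> (norm ?a + norm ?v)^2"
      by (intro power_mono norm_triangle_ineq) simp
    also have "\<dots> = (norm ?a)^2 + 2 * norm ?a * norm ?v + (norm ?v)^2" by (simp add: power2_sum)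
    also have "\<dots> \<le> (norm ?a)^2 + 2 * norm y * norm ?v + (norm ?v)^2"
      using res_bnd[of l] by (simp add: mult_right_mono)
    finally have r: "(norm (y - Xt X t *v bp l))^2 \<le> (norm ?a)^2 + 2 * norm y * norm ?v + (norm ?v)^2"
      unfolding eq .
    have "(\<Sum>j\<in>UNIV. (1 - (t $ j)^2) * (bp l $ j)^2) \<le> (\<Sum>j\<in>UNIV. (1 - (s l $ j)^2) * (bl l $ j)^2 + q l j)"
      by (intro sum_mono) (simp add: q_def)
    also have "\<dots> = (\<Sum>j\<in>UNIV. (1 - (s l $ j)^2) * (bl l $ j)^2) + (\<Sum>j\<in>UNIV. q l j)"
      by (simp add: sum.distrib)
    finally have "\<delta> * (\<Sum>j\<in>UNIV. (1 - (t $ j)^2) * (bp l $ j)^2) \<le>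
        \<delta> * (\<Sum>j\<in>UNIV. (1 - (s l $ j)^2) * (bl l $ j)^2) + \<delta> * (\<Sum>j\<in>UNIV. q l j)"
      using dpos by (simp add: distrib_left[symmetric] mult_left_mono)
    with r show ?thesis unfolding Phi_def G_def by simp
  qed
  define A where "A l = Phi X y \<delta> (s l) bs - Phi X y \<delta> t bs + G l" for l
  have A0: "A \<longlonglongrightarrow> 0"
  proof -
    have "A \<longlonglongrightarrow> Phi X y \<delta> t bs - Phi X y \<delta> t bs + 0" unfolding A_def[abs_def]
      by (intro tendsto_intros Phi_cont assms(5) G0)
    then show ?thesis by simp
  qed
  have vA: "(norm (Xt X t *v bp l - Xt X t *v bs))^2 \<le> A l" for l
  proof -
    have "0 \<le> (norm (Xt X (s l) *v bs - Xt X (s l) *v bl l))^2" by simp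
    then show ?thesis using Nt[of "bp l"] PG[of l] Nl[of l bs] unfolding A_def by linarith
  qed
  have v0: "(\<lambda>l. Xt X t *v bp l - Xt X t *v bs) \<longlonglongrightarrow> 0"
  proof (rule Lim_null_comparison)
    show "\<forall>\<^sub>F l in sequentially. norm (Xt X t *v bp l - Xt X t *v bs) \<le> sqrt (A l)"
      using vA by (intro always_eventually allI real_le_rsqrt)
    show "(\<lambda>l. sqrt (A l)) \<longlonglongrightarrow> 0" using tendsto_real_sqrt[OF A0] by simp
  qed
  have "(\<lambda>l. (Xt X t *v bp l - Xt X t *v bs) + Xt X t *v bs + X *v e l) \<longlonglongrightarrow> 0 + Xt X t *v bs + X *v 0"
    by (intro tendsto_intros v0 e0)
  then have fit: "(\<lambda>l. Xt X (s l) *v bl l) \<longlonglongrightarrow> Xt X t *v bs"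
    using split by simp
  have "(\<lambda>l. (1 / real CARD('n)) * (norm (y - Xt X (s l) *v bl l))^2 + lam * (\<Sum>j\<in>UNIV. s l $ j))
      \<longlonglongrightarrow> (1 / real CARD('n)) * (norm (y - Xt X t *v bs))^2 + lam * (\<Sum>j\<in>UNIV. t $ j)"
    by (intro tendsto_intros fit sj)
  then show ?thesis unfolding f_lam_def bl_def bs_def .
qed

end
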